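(* Let $C$ be a field, $W$ a $C$-vector space of dimension $r$, and let $W_{i,j}$ ($i=1,\dots,n$; $j=1,\dots,\ell$, with $\ell\leq r$) be subspaces of $W$, given by bases, such that $W=\bigoplus_{j=1}^{\ell}W_{i,j}$ for each $i=1,\dots,n$. For a tuple $\mathbf k=(k_1,\dots,k_m)$ with $m\le n$ write $W_{\mathbf k}:=\bigcap_{i=1}^{m}W_{i,k_i}$. Consider the following algorithm: (1) set $U:=\{(j): 1\le j\le \ell,\ W_{1,j}\neq\{0\}\}$; (2) for $i=2,\dots,n$: set $U_{\mathrm{new}}:=\emptyset$; for each $j=1,\dots,\ell$ and each $\mathbf k\in U$, if $W_{\mathbf k}\cap W_{i,j}\neq\{0\}$ then add the tuple $(\mathbf k,j)$ (i.e. $\mathbf k$ with $j$ appended) to $U_{\mathrm{new}}$; afterwards set $U:=U_{\mathrm{new}}$; (3) return $U$. Then the algorithm is correct, i.e. it returns exactly the set of all tuples $\mathbf j=(j_1,\dots,j_n)\in\{1,\dots,\ell\}^n$ with $\bigcap_{i=1}^n W_{i,j_i}\neq\{0\}$, and, if bases of the spaces $W_{\mathbf k}$ for $\mathbf k\in U$ are cached (so that a basis of $W_{(\mathbf k,j)}=W_{\mathbf k}\cap W_{i,j}$ is available from the intersection test), it needs no more than $8nr^4$ operations in $C$.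
   Context: Operations are counted as arithmetic operations in $C$, with the convention that the intersection of two subspaces of $W$ of dimensions $d_1,d_2$ (given by bases, yielding a basis of the intersection) is computed, e.g. by Gaussian elimination, using no more than $\min(r,d_1+d_2)^2\max(r,d_1+d_2)$ operations in $C$. *)

theory Defs
  imports Complex_Main "HOL-Library.FuncSet"
begin

text \<open>The intersection W_k of a tuple k = (k_1,...,k_m) (a list), taken inside W;
  component number i (0-based list index) refers to the family i+1.\<close>
definition Wtup :: "'v set \<Rightarrow> (nat \<Rightarrow> nat \<Rightarrow> 'v set) \<Rightarrow> nat list \<Rightarrow> 'v set" where
  "Wtup W Ws ks = W \<inter> (\<Inter>i\<in>{..<length ks}. Ws (Suc i) (ks ! i))"

text \<open>Cost (number of operations in C) of intersecting two subspaces of dimensions d1, d2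
  of an r-dimensional space, as fixed by the paper's convention.\<close>
definition isect_cost :: "nat \<Rightarrow> nat \<Rightarrow> nat \<Rightarrow> nat" where
  "isect_cost r d1 d2 = (min r (d1 + d2))^2 * max r (d1 + d2)"

definition is_direct_sum ::
  "('a::field \<Rightarrow> 'v::ab_group_add \<Rightarrow> 'v) \<Rightarrow> 'v set \<Rightarrow> (nat \<Rightarrow> 'v set) \<Rightarrow> nat set \<Rightarrow> bool" where
  "is_direct_sum scale W Ws J \<longleftrightarrow>
     (\<forall>j\<in>J. module.subspace scale (Ws j) \<and> Ws j \<subseteq> W) \<and>
     (\<forall>v\<in>W. \<exists>!f. f \<in> (\<Pi>\<^sub>E j\<in>J. Ws j) \<and> v = (\<Sum>j\<in>J. f j))"

text \<open>Stage 1 only tests whether given bases are empty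
  (no arithmetic); in stage i \<ge> 2 each pair (k,j) with k in U costs one intersection
  W_k \<inter> W_{i,j} (bases of W_k being cached).\<close>
fun alg :: "('a::field \<Rightarrow> 'v::ab_group_add \<Rightarrow> 'v) \<Rightarrow> 'v set \<Rightarrow> (nat \<Rightarrow> nat \<Rightarrow> 'v set)
             \<Rightarrow> nat \<Rightarrow> nat \<Rightarrow> nat \<Rightarrow> nat list set \<times> nat" where
  "alg scale W Ws r l 0 = ({}, 0)"
| "alg scale W Ws r l (Suc 0) = ({[j] | j. j \<in> {1..l} \<and> Ws 1 j \<noteq> {0}}, 0)"
| "alg scale W Ws r l (Suc (Suc i)) =
     (let (U, c) = alg scale W Ws r l (Suc i) in
       ({k @ [j] | k j. k \<in> U \<and> j \<in> {1..l} \<and> Wtup W Ws k \<inter> Ws (Suc (Suc i)) j \<noteq> {0}},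
        c + (\<Sum>k\<in>U. \<Sum>j=1..l. isect_cost r (vector_space.dim scale (Wtup W Ws k))
                                          (vector_space.dim scale (Ws (Suc (Suc i)) j)))))"

end

theory Submission imports Defs begin

context vector_space begin
lemma sum_dim_le:
  assumes J: "finite J"
  and Vsub: "\<And>j. j \<in> J \<Longrightarrow> subspace (V j)"
  and VU: "\<And>j. j \<in> J \<Longrightarrow> V j \<subseteq> U"
  and UF: "U \<subseteq> span F" "finite F"
  and ind: "\<And>f. (\<And>j. j \<in> J \<Longrightarrow> f j \<in> V j) \<Longrightarrow> (\<Sum>j\<in>J. f j) = 0 \<Longrightarrow> (\<forall>j\<in>J. f j = 0)"
  shows "(\<Sum>j\<in>J. dim (V j)) \<le> dim U"
proof -
  have "\<forall>j. \<exists>B. B \<subseteq> V j \<and> independent B \<and> V j \<subseteq> span B \<and> card B = dim (V j)"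
    by (metis basis_exists)
  then obtain B where B: "\<And>j. B j \<subseteq> V j" "\<And>j. independent (B j)" "\<And>j. V j \<subseteq> span (B j)"
    "\<And>j. card (B j) = dim (V j)" by metis
  obtain C where C: "C \<subseteq> U" "independent C" "U \<subseteq> span C" "card C = dim U" by (rule basis_exists)
  have Cfin: "finite C" using independent_span_bound[OF UF(2) C(2)] C(1) UF(1) by blast
  have disj: "B a \<inter> B b = {}" if ab: "a \<in> J" "b \<in> J" "a \<noteq> b" for a b
  proof (rule ccontr)
    assume "B a \<inter> B b \<noteq> {}"
    then obtain v where v: "v \<in> B a" "v \<in> B b" by blast
    define f where "f = (\<lambda>j. if j = a then v else if j = b then -v else 0)"
    have "(\<Sum>j\<in>J. f j) = (\<Sum>j\<in>J. (if j = a then v else 0) + (if j = b then -v else 0))"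
      by (rule sum.cong) (auto simp: f_def ab)
    also have "\<dots> = v + - v" by (simp add: sum.distrib ab J)
    finally have s0: "(\<Sum>j\<in>J. f j) = 0" by simp
    have "f j \<in> V j" if "j \<in> J" for j
      using v B(1) Vsub[OF that] subspace_neg subspace_0 by (auto simp: f_def)
    from ind[OF this s0] ab have "f a = 0" by blast
    then have "v = 0" by (simp add: f_def)
    with v B(2) dependent_zero show False by blast
  qed
  define BB where "BB = (\<Union>j\<in>J. B j)"
  have indep: "independent BB"
    unfolding independent_explicit_finite_subsets
  proof (intro allI impI ballI)
    fix S u v assume S: "S \<subseteq> BB" "finite S" and sum0: "(\<Sum>v\<in>S. u v *s v) = 0" and v: "v \<in> S"
    define f where "f j = (\<Sum>w\<in>S \<inter> B j. u w *s w)" for j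
    have "(\<Sum>j\<in>J. f j) = (\<Sum>w\<in>(\<Union>j\<in>J. S \<inter> B j). u w *s w)"
      unfolding f_def by (rule sum.UNION_disjoint[symmetric]) (use J S disj in auto)
    also have "(\<Union>j\<in>J. S \<inter> B j) = S" using S by (auto simp: BB_def)
    finally have s0: "(\<Sum>j\<in>J. f j) = 0" using sum0 by simp
    have "f j \<in> V j" if "j \<in> J" for j
      unfolding f_def using B(1) Vsub[OF that]
      by (intro subspace_sum) (auto intro: subspace_scale)
    from ind[OF this s0] have f0: "\<forall>j\<in>J. f j = 0" .
    obtain j0 where j0: "j0 \<in> J" "v \<in> B j0" using S v by (auto simp: BB_def)
    have "f j0 = 0" using f0 j0 by blast
    with B(2)[of j0] show "u v = 0"
      unfolding f_def independent_explicit_finite_subsets using S j0 v by auto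
  qed
  have BBU: "BB \<subseteq> U" using B(1) VU by (auto simp: BB_def)
  have "finite BB \<and> card BB \<le> card C"
    by (rule independent_span_bound[OF Cfin indep]) (use BBU C(3) in auto)
  then have finBB: "finite BB" and cBB: "card BB \<le> dim U" using C(4) by auto
  have "card BB = (\<Sum>j\<in>J. card (B j))" unfolding BB_def
    by (rule card_UN_disjoint) (use J finBB disj in \<open>auto simp: BB_def intro: finite_subset\<close>)
  with cBB B(4) show ?thesis by simp
qed
end

lemma Wtup_snoc: "Wtup W Ws (k @ [j]) = Wtup W Ws k \<inter> Ws (Suc (length k)) j"
  proof -
  have "(\<Inter>i\<in>{..<length k}. Ws (Suc i) ((k @ [j]) ! i)) = (\<Inter>i\<in>{..<length k}. Ws (Suc i) (k ! i))"
    by (rule INF_cong) (auto simp: nth_append)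
  then show ?thesis unfolding Wtup_def by (auto simp: lessThan_Suc)
qed

lemma Wtup_Nil: "Wtup W Ws [] = W"
  unfolding Wtup_def by simp

lemma isect_cost_le: "isect_cost r a b \<le> r^2 * (a + b)"
proof (cases "a + b \<le> r")
  case True
  have "(a+b)*(a+b)*r \<le> r*(a+b)*r" using True by (intro mult_le_mono) auto
  then show ?thesis using True by (simp add: isect_cost_def power2_eq_square min_def max_def algebra_simps)
next
  case False then show ?thesis by (simp add: isect_cost_def power2_eq_square min_def max_def algebra_simps)
qed

theorem theorem1:
  fixes scale :: "'a::field \<Rightarrow> 'v::ab_group_add \<Rightarrow> 'v"
    and W :: "'v set" and Ws :: "nat \<Rightarrow> nat \<Rightarrow> 'v set"
    and r l n :: nat
  assumes vs: "vector_space scale"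
    and W_sub: "module.subspace scale W"
    and W_fin: "\<exists>B. finite B \<and> B \<subseteq> W \<and> module.span scale B = W"
    and W_dim: "vector_space.dim scale W = r"
    and l_le: "l \<le> r"
    and n_pos: "1 \<le> n"
    and dsum: "\<And>i. i \<in> {1..n} \<Longrightarrow> is_direct_sum scale W (Ws i) {1..l}"
  shows "fst (alg scale W Ws r l n) =
           {js. length js = n \<and> set js \<subseteq> {1..l} \<and>
                (\<Inter>i\<in>{1..n}. Ws i (js ! (i - 1))) \<noteq> {0}}
         \<and> snd (alg scale W Ws r l n) \<le> 8 * n * r ^ 4"
proof -
  interpret vector_space scale by (rule vs)
  obtain F where F: "finite F" "F \<subseteq> W" "span F = W" using W_fin by blast
  have WF: "W \<subseteq> span F" using F by simp
  have Wsub_i: "subspace (Ws i j) \<and> Ws i j \<subseteq> W" if "i \<in> {1..n}" "j \<in> {1..l}" for i j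
    using dsum[OF that(1)] that(2) unfolding is_direct_sum_def by blast
  have indep_i: "\<forall>j\<in>{1..l}. f j = 0"
    if i: "i \<in> {1..n}" and fj: "\<And>j. j\<in>{1..l} \<Longrightarrow> f j \<in> Ws i j"
      and s0: "(\<Sum>j\<in>{1..l}. f j) = 0" for i f
  proof -
    have "0 \<in> W" using subspace_0[OF W_sub] .
    then have uniq: "\<exists>!g. g \<in> (\<Pi>\<^sub>E j\<in>{1..l}. Ws i j) \<and> 0 = (\<Sum>j\<in>{1..l}. g j)"
      using dsum[OF i] unfolding is_direct_sum_def by blast
    have g1: "restrict f {1..l} \<in> (\<Pi>\<^sub>E j\<in>{1..l}. Ws i j) \<and> 0 = (\<Sum>j\<in>{1..l}. restrict f {1..l} j)"
      using fj s0 by auto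
    have g2: "(\<lambda>j\<in>{1..l}. 0) \<in> (\<Pi>\<^sub>E j\<in>{1..l}. Ws i j) \<and> 0 = (\<Sum>j\<in>{1..l}. (\<lambda>j\<in>{1..l}. (0::'v)) j)"
      using Wsub_i[OF i] subspace_0 by auto
    have "restrict f {1..l} = (\<lambda>j\<in>{1..l}. 0)" using uniq g1 g2 by blast
    then show ?thesis by (metis restrict_apply')
  qed
  define S where "S m = {ks::nat list. length ks = m \<and> set ks \<subseteq> {1..l}}" for m
  have Sfin: "finite (S m)" for m
    using finite_lists_length_eq[of "{1..l}" m] unfolding S_def by (simp add: conj_commute)
  have Wt_sub: "subspace (Wtup W Ws k) \<and> Wtup W Ws k \<subseteq> W"
    if "length k \<le> n" "set k \<subseteq> {1..l}" for k
    using that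
  proof (induction k rule: rev_induct)
    case Nil then show ?case using W_sub by (simp add: Wtup_Nil)
  next
    case (snoc x xs)
    then have "subspace (Ws (Suc (length xs)) x)" using Wsub_i by auto
    with snoc show ?case by (auto simp: Wtup_snoc intro: subspace_inter)
  qed
  have S_Suc: "S (Suc m) = (\<lambda>(k,j). k @ [j]) ` (S m \<times> {1..l})" for m
  proof
    show "S (Suc m) \<subseteq> (\<lambda>(k,j). k @ [j]) ` (S m \<times> {1..l})"
    proof
      fix k' assume k': "k' \<in> S (Suc m)"
      then have "k' \<noteq> []" by (auto simp: S_def)
      then have e: "k' = butlast k' @ [last k']" by simp
      have "last k' \<in> set k'" using \<open>k' \<noteq> []\<close> by simp
      then have "butlast k' \<in> S m" "last k' \<in> {1..l}" using k'
        by (auto simp: S_def dest: in_set_butlastD)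
      then show "k' \<in> (\<lambda>(k,j). k @ [j]) ` (S m \<times> {1..l})"
        using e by (auto intro!: image_eqI[of _ _ "(butlast k', last k')"])
    qed
  qed (auto simp: S_def)
  have S_inj: "inj_on (\<lambda>(k,j). k @ [j]) (S m \<times> {1..l})" for m
    by (auto simp: inj_on_def)
  have Wt_Suc: "(\<Sum>k\<in>S (Suc m). g k) = (\<Sum>k\<in>S m. \<Sum>j\<in>{1..l}. g (k @ [j]))" for m and g :: "nat list \<Rightarrow> nat"
  proof -
    have "(\<Sum>k\<in>S (Suc m). g k) = (\<Sum>x\<in>S m \<times> {1..l}. g ((\<lambda>(k,j). k @ [j]) x))"
      unfolding S_Suc using sum.reindex[OF S_inj, of g] by (simp add: o_def)
    also have "\<dots> = (\<Sum>k\<in>S m. \<Sum>j\<in>{1..l}. g (k @ [j]))"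
      by (simp add: sum.cartesian_product split_def)
    finally show ?thesis .
  qed
  have D: "(\<Sum>k\<in>S m. dim (Wtup W Ws k)) \<le> r" if "m \<le> n" for m
    using that
  proof (induction m)
    case 0
    have "S 0 = {[]}" by (auto simp: S_def)
    then show ?case using W_dim by (simp add: Wtup_Nil)
  next
    case (Suc m)
    have "(\<Sum>k\<in>S (Suc m). dim (Wtup W Ws k)) =
          (\<Sum>k\<in>S m. \<Sum>j\<in>{1..l}. dim (Wtup W Ws k \<inter> Ws (Suc m) j))"
      unfolding Wt_Suc by (rule sum.cong[OF refl], rule sum.cong[OF refl]) (simp add: Wtup_snoc S_def)
    also have "\<dots> \<le> (\<Sum>k\<in>S m. dim (Wtup W Ws k))"
    proof (rule sum_mono)
      fix k assume k: "k \<in> S m"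
      then have Wk: "subspace (Wtup W Ws k) \<and> Wtup W Ws k \<subseteq> W"
        using Wt_sub Suc.prems by (auto simp: S_def)
      have i: "Suc m \<in> {1..n}" using Suc.prems by auto
      show "(\<Sum>j\<in>{1..l}. dim (Wtup W Ws k \<inter> Ws (Suc m) j)) \<le> dim (Wtup W Ws k)"
      proof (rule sum_dim_le[OF _ _ _ _ F(1)])
        show "subspace (Wtup W Ws k \<inter> Ws (Suc m) j)" if "j \<in> {1..l}" for j
          using Wk Wsub_i[OF i that] by (auto intro: subspace_inter)
        show "Wtup W Ws k \<subseteq> span F" using Wk WF by blast
        show "\<forall>j\<in>{1..l}. f j = 0" if "\<And>j. j \<in> {1..l} \<Longrightarrow> f j \<in> Wtup W Ws k \<inter> Ws (Suc m) j"
          and "(\<Sum>j\<in>{1..l}. f j) = 0" for f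
          using indep_i[OF i, of f] that by blast
      qed auto
    qed
    also have "\<dots> \<le> r" using Suc by simp
    finally show ?case .
  qed
  have dimpos: "1 \<le> dim (Wtup W Ws k)" if "k \<in> S m" "m \<le> n" "Wtup W Ws k \<noteq> {0}" for k m
  proof (rule ccontr)
    assume "\<not> 1 \<le> dim (Wtup W Ws k)"
    then have d0: "dim (Wtup W Ws k) = 0" by simp
    have Wk: "subspace (Wtup W Ws k) \<and> Wtup W Ws k \<subseteq> W" using Wt_sub that by (auto simp: S_def)
    obtain B where B: "B \<subseteq> Wtup W Ws k" "independent B" "Wtup W Ws k \<subseteq> span B" "card B = dim (Wtup W Ws k)"
      by (rule basis_exists)
    have "finite B" using independent_span_bound[OF F(1) B(2)] B(1) Wk WF by blast
    with B d0 have "B = {}" by simp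
    with B(3) have "Wtup W Ws k \<subseteq> {0}" by simp
    with Wk subspace_0 that(3) show False by blast
  qed
  have Wsdim: "(\<Sum>j\<in>{1..l}. dim (Ws i j)) \<le> r" if i: "i \<in> {1..n}" for i
    unfolding W_dim[symmetric]
    by (rule sum_dim_le[OF _ _ _ WF F(1)]) (use Wsub_i[OF i] indep_i[OF i] in auto)
  have main: "fst (alg scale W Ws r l (Suc i)) = {k\<in>S (Suc i). Wtup W Ws k \<noteq> {0}}
              \<and> snd (alg scale W Ws r l (Suc i)) \<le> 2 * i * r^4" if "Suc i \<le> n" for i
    using that
  proof (induction i)
    case 0
    have "{[j] |j. j \<in> {1..l} \<and> Ws 1 j \<noteq> {0}} = {k\<in>S (Suc 0). Wtup W Ws k \<noteq> {0}}"
    proof -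
      have e: "Wtup W Ws [j] = Ws 1 j" if "j \<in> {1..l}" for j
        using Wsub_i[of 1 j] that 0 Wtup_snoc[of W Ws "[]" j] by (auto simp: Wtup_Nil)
      show ?thesis
      proof (intro equalityI subsetI)
        fix x assume "x \<in> {[j] |j. j \<in> {1..l} \<and> Ws 1 j \<noteq> {0}}"
        then obtain j where "x = [j]" "j \<in> {1..l}" "Ws 1 j \<noteq> {0}" by blast
        then show "x \<in> {k\<in>S (Suc 0). Wtup W Ws k \<noteq> {0}}" using e by (simp add: S_def)
      next
        fix x assume x: "x \<in> {k\<in>S (Suc 0). Wtup W Ws k \<noteq> {0}}"
        then have "length x = Suc 0" by (simp add: S_def)
        then obtain j where xj: "x = [j]" by (auto simp: length_Suc_conv)
        with x have "j \<in> {1..l}" by (simp add: S_def)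
        with x xj e show "x \<in> {[j] |j. j \<in> {1..l} \<and> Ws 1 j \<noteq> {0}}" by auto
      qed
    qed
    then show ?case by simp
  next
    case (Suc i)
    obtain U c where Uc: "alg scale W Ws r l (Suc i) = (U, c)" by fastforce
    from Suc Uc have IH: "U = {k\<in>S (Suc i). Wtup W Ws k \<noteq> {0}}" "c \<le> 2 * i * r^4" by auto
    let ?U' = "{k @ [j] | k j. k \<in> U \<and> j \<in> {1..l} \<and> Wtup W Ws k \<inter> Ws (Suc (Suc i)) j \<noteq> {0}}"
    let ?c' = "c + (\<Sum>k\<in>U. \<Sum>j=1..l. isect_cost r (dim (Wtup W Ws k)) (dim (Ws (Suc (Suc i)) j)))"
    have alg: "alg scale W Ws r l (Suc (Suc i)) = (?U', ?c')" using Uc by simp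
    have set: "?U' = {k\<in>S (Suc (Suc i)). Wtup W Ws k \<noteq> {0}}"
    proof
      show "?U' \<subseteq> {k\<in>S (Suc (Suc i)). Wtup W Ws k \<noteq> {0}}"
        using IH(1) by (auto simp: S_def Wtup_snoc)
    next
      show "{k\<in>S (Suc (Suc i)). Wtup W Ws k \<noteq> {0}} \<subseteq> ?U'"
      proof
        fix k' assume k': "k' \<in> {k\<in>S (Suc (Suc i)). Wtup W Ws k \<noteq> {0}}"
        then obtain k j where kj: "k' = k @ [j]" "k \<in> S (Suc i)" "j \<in> {1..l}"
        proof -
          have "k' \<in> (\<lambda>(k,j). k @ [j]) ` (S (Suc i) \<times> {1..l})" using k' S_Suc[of "Suc i"] by simp
          then show ?thesis using that by auto
        qed
        have lk: "length k = Suc i" using kj by (simp add: S_def)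
        have nz: "Wtup W Ws k \<inter> Ws (Suc (Suc i)) j \<noteq> {0}" using k' kj lk by (simp add: Wtup_snoc)
        have "subspace (Wtup W Ws k')" using Wt_sub k' Suc.prems by (auto simp: S_def)
        then have "0 \<in> Wtup W Ws k'" by (rule subspace_0)
        then have "Wtup W Ws k \<noteq> {0}" using nz kj lk by (auto simp: Wtup_snoc)
        then show "k' \<in> ?U'" using kj IH(1) nz by blast
      qed
    qed
    define d where "d k = dim (Wtup W Ws k)" for k
    define e where "e j = dim (Ws (Suc (Suc i)) j)" for j
    have Ufin: "finite U" using IH(1) Sfin by simp
    have sd: "(\<Sum>k\<in>U. d k) \<le> r"
    proof -
      have "(\<Sum>k\<in>U. d k) \<le> (\<Sum>k\<in>S (Suc i). d k)"
        using IH(1) Sfin by (intro sum_mono2) auto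
      also have "\<dots> \<le> r" unfolding d_def using D Suc.prems by simp
      finally show ?thesis .
    qed
    have cU: "card U \<le> r"
    proof -
      have "card U = (\<Sum>k\<in>U. 1)" by simp
      also have "\<dots> \<le> (\<Sum>k\<in>U. d k)"
      proof (rule sum_mono)
        fix k assume "k \<in> U"
        then have "k \<in> S (Suc i)" "Wtup W Ws k \<noteq> {0}" using IH(1) by auto
        then show "1 \<le> d k" unfolding d_def using dimpos[of k "Suc i"] Suc.prems by simp
      qed
      finally show ?thesis using sd by simp
    qed
    have se: "(\<Sum>j\<in>{1..l}. e j) \<le> r" unfolding e_def using Wsdim Suc.prems by simp
    have "(\<Sum>k\<in>U. \<Sum>j=1..l. isect_cost r (d k) (e j)) \<le> (\<Sum>k\<in>U. \<Sum>j=1..l. r^2 * (d k + e j))"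
      by (intro sum_mono isect_cost_le)
    also have "\<dots> = r^2 * (l * (\<Sum>k\<in>U. d k) + card U * (\<Sum>j\<in>{1..l}. e j))"
      by (simp add: sum.distrib sum_distrib_left[symmetric] sum_distrib_right[symmetric] algebra_simps)
    also have "\<dots> \<le> r^2 * (r * r + r * r)"
      using sd cU se l_le by (intro mult_le_mono2 add_mono mult_le_mono) auto
    also have "\<dots> = 2 * r^4" by (simp add: power_def algebra_simps)
    finally have "?c' \<le> 2 * i * r^4 + 2 * r^4" using IH(2) unfolding d_def e_def by linarith
    then show ?case using alg set by simp
  qed
  have n: "n = Suc (n - 1)" using n_pos by simp
  have M: "fst (alg scale W Ws r l n) = {k\<in>S n. Wtup W Ws k \<noteq> {0}}"
     "snd (alg scale W Ws r l n) \<le> 2 * (n - 1) * r^4"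
    using main[of "n - 1"] n by auto
  have eq: "(\<Inter>i\<in>{1..n}. Ws i (js ! (i - 1))) = Wtup W Ws js"
    if "length js = n" "set js \<subseteq> {1..l}" for js
  proof -
    have "{1..n} = Suc ` {..<n}" by (simp add: image_Suc_lessThan)
    then have "(\<Inter>i\<in>{1..n}. Ws i (js ! (i - 1))) = (\<Inter>i\<in>{..<n}. Ws (Suc i) (js ! i))" by simp
    moreover have "(\<Inter>i\<in>{..<n}. Ws (Suc i) (js ! i)) \<subseteq> Ws 1 (js ! 0)"
      using n_pos by (intro INF_lower2[of 0]) auto
    moreover have "js ! 0 \<in> {1..l}"
    proof -
      have "js ! 0 \<in> set js" using that(1) n_pos by (intro nth_mem) simp
      then show ?thesis using that(2) by blast
    qed
    moreover have "Ws 1 (js ! 0) \<subseteq> W" using Wsub_i[of 1 "js ! 0"] n_pos calculation(3) by auto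
    ultimately have "(\<Inter>i\<in>{..<n}. Ws (Suc i) (js ! i)) \<subseteq> W" by blast
    then show ?thesis unfolding Wtup_def that(1) \<open>(\<Inter>i\<in>{1..n}. Ws i (js ! (i - 1))) = (\<Inter>i\<in>{..<n}. Ws (Suc i) (js ! i))\<close>
      by (simp add: Int_absorb1)
  qed
  have "{k\<in>S n. Wtup W Ws k \<noteq> {0}} = {js. length js = n \<and> set js \<subseteq> {1..l} \<and>
                (\<Inter>i\<in>{1..n}. Ws i (js ! (i - 1))) \<noteq> {0}}"
    using eq by (auto simp: S_def)
  moreover have "2 * (n - 1) * r^4 \<le> 8 * n * r^4" by (intro mult_le_mono1) simp
  then have "snd (alg scale W Ws r l n) \<le> 8 * n * r^4" using M(2) by (rule le_trans[rotated])
  ultimately show ?thesis using M(1) by simp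
qed

end
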